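(* Let $G=(V=V_0\uplus V_1,v_{\mathsf{init}},E,\gamma)$ be a quantitative graph game, let $\mu>0$ be the maximum of the absolute values of the costs along transitions, and let $d=\frac pq>1$ be the discount factor with $p,q$ positive integers. Then for all $(v,w)\in E$ and all $k>0$, \[\mathsf{cost}_k(v,w)=\frac{q^{k-1}n_1+q^{k-2}p\,n_2+\cdots+p^{k-1}n_k}{p^{k-1}}\] for some integers $n_1,\dots,n_k$ with $|n_i|\le\mu$ for all $i\in\{1,\dots,k\}$.
   Context: A quantitative graph game $G=(V=V_0\uplus V_1, v_{\mathsf{init}},E,\gamma)$ consists of a finite directed graph $(V,E)$ in which every state has at least one outgoing edge, a partition of $V$ into $V_0$ (maximizing player) and $V_1$ (minimizing player), an initial state, and an integer cost function $\gamma:E\to\mathbb{Z}$. Value iteration defines $\mathit{wt}_1(v)=\max\{\gamma(v,w):(v,w)\in E\}$ for $v\in V_0$ ($\min$ for $v\in V_1$) and $\mathit{wt}_{k+1}(v)=\max\{\gamma(v,w)+\frac1d\mathit{wt}_k(w):(v,w)\in E\}$ for $v\in V_0$ ($\min$ for $v\in V_1$). The transition costs are $\mathsf{cost}_1(v,w)=\gamma(v,w)$ and $\mathsf{cost}_k(v,w)=\gamma(v,w)+\frac1d\mathit{wt}_{k-1}(w)$ for $k>1$, so that $\mathit{wt}_k(v)$ is the max (for $v\in V_0$) or min (for $v\in V_1$) of $\mathsf{cost}_k(v,w)$ over $(v,w)\in E$. *)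

theory Defs
  imports Complex_Main
begin

definition graph_game ::
  "'v set \<Rightarrow> 'v set \<Rightarrow> 'v set \<Rightarrow> 'v \<Rightarrow> ('v \<times> 'v) set \<Rightarrow> bool" where
  "graph_game V V0 V1 vinit E \<longleftrightarrow>
     finite V \<and> V = V0 \<union> V1 \<and> V0 \<inter> V1 = {} \<and> vinit \<in> V \<and>
     E \<subseteq> V \<times> V \<and> (\<forall>v\<in>V. \<exists>w. (v, w) \<in> E)"

text \<open>Value iteration: wt k v for k >= 1 (wt 0 is an unused dummy).\<close>
fun wt :: "'v set \<Rightarrow> ('v \<times> 'v) set \<Rightarrow> ('v \<times> 'v \<Rightarrow> int) \<Rightarrow> real \<Rightarrow> nat \<Rightarrow> 'v \<Rightarrow> real" where
  "wt V0 E \<gamma> d 0 v = 0"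
| "wt V0 E \<gamma> d (Suc 0) v =
     (if v \<in> V0 then Max {real_of_int (\<gamma> (v, w)) | w. (v, w) \<in> E}
      else Min {real_of_int (\<gamma> (v, w)) | w. (v, w) \<in> E})"
| "wt V0 E \<gamma> d (Suc (Suc k)) v =
     (if v \<in> V0 then Max {real_of_int (\<gamma> (v, w)) + wt V0 E \<gamma> d (Suc k) w / d | w. (v, w) \<in> E}
      else Min {real_of_int (\<gamma> (v, w)) + wt V0 E \<gamma> d (Suc k) w / d | w. (v, w) \<in> E})"

definition cost :: "'v set \<Rightarrow> ('v \<times> 'v) set \<Rightarrow> ('v \<times> 'v \<Rightarrow> int) \<Rightarrow> real \<Rightarrow> nat \<Rightarrow> 'v \<Rightarrow> 'v \<Rightarrow> real" where
  "cost V0 E \<gamma> d k v w =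
     (if k = 1 then real_of_int (\<gamma> (v, w))
      else real_of_int (\<gamma> (v, w)) + wt V0 E \<gamma> d (k - 1) w / d)"

end

theory Submission
  imports Defs
begin

lemma reidx:
  fixes f :: "nat \<Rightarrow> real"
  shows "(\<Sum>i = 1..k. f (k - i)) = (\<Sum>j<k. f j)"
  by (rule sum.reindex_bij_witness[where i="\<lambda>j. k - j" and j="\<lambda>i. k - i"]) auto

lemma coef:
  fixes p q :: nat
  assumes "p > 0" "1 \<le> i" "i \<le> k"
  shows "real q ^ (k - i) * real p ^ (i - 1) * x / real p ^ (k - 1) = (real q / real p) ^ (k - i) * x"
proof -
  have e: "real p ^ (k - 1) = real p ^ (k - i) * real p ^ (i - 1)"
    using assms by (simp add: power_add[symmetric])
  show ?thesis using assms unfolding e by (simp add: power_divide field_simps)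
qed

lemma wt_attained:
  assumes fin: "finite V" and EV: "E \<subseteq> V \<times> V" and out: "\<forall>v\<in>V. \<exists>w. (v, w) \<in> E"
    and v: "v \<in> V" and k: "k > 0"
  shows "\<exists>w. (v, w) \<in> E \<and> wt V0 E \<gamma> d k v = cost V0 E \<gamma> d k v w"
proof -
  have finw: "finite {w. (v, w) \<in> E}" using EV fin
    by (metis (no_types, lifting) SigmaD2 finite_subset mem_Collect_eq subsetI subset_eq)
  have ne: "{w. (v, w) \<in> E} \<noteq> {}" using out v by auto
  have gen: "\<And>f :: 'a \<Rightarrow> real. Max {f w | w. (v, w) \<in> E} \<in> {f w | w. (v, w) \<in> E}
        \<and> Min {f w | w. (v, w) \<in> E} \<in> {f w | w. (v, w) \<in> E}"
  proof -
    fix f :: "'a \<Rightarrow> real"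
    have s: "{f w | w. (v, w) \<in> E} = f ` {w. (v, w) \<in> E}" by auto
    show "?thesis f" unfolding s using finw ne by (simp add: Max_in Min_in)
  qed
  obtain j where kj: "k = Suc j" using k by (cases k) auto
  show ?thesis
  proof (cases j)
    case 0
    then show ?thesis using kj gen[of "\<lambda>w. real_of_int (\<gamma> (v, w))"]
      by (auto simp: cost_def split: if_splits)
  next
    case (Suc j')
    then show ?thesis using kj gen[of "\<lambda>w. real_of_int (\<gamma> (v, w)) + wt V0 E \<gamma> d (Suc j') w / d"]
      by (auto simp: cost_def split: if_splits)
  qed
qed

theorem lemma4:
  fixes V V0 V1 :: "'v set" and vinit :: 'v and E :: "('v \<times> 'v) set"
    and \<gamma> :: "'v \<times> 'v \<Rightarrow> int" and \<mu> :: int and p q :: nat and d :: real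
  assumes "graph_game V V0 V1 vinit E"
    and "\<mu> = Max {\<bar>\<gamma> e\<bar> | e. e \<in> E}"
    and "\<mu> > 0"
    and "p > 0" and "q > 0"
    and "d = real p / real q"
    and "d > 1"
  shows "\<forall>(v, w) \<in> E. \<forall>k > 0. \<exists>n :: nat \<Rightarrow> int.
           (\<forall>i \<in> {1..k}. \<bar>n i\<bar> \<le> \<mu>) \<and>
           cost V0 E \<gamma> d k v w =
             (\<Sum>i = 1..k. real q ^ (k - i) * real p ^ (i - 1) * real_of_int (n i)) / real p ^ (k - 1)"
proof -
  have fin: "finite V" and EV: "E \<subseteq> V \<times> V" and out: "\<forall>v\<in>V. \<exists>w. (v, w) \<in> E"
    using assms(1) unfolding graph_game_def by auto
  have finE: "finite E" using fin EV by (meson finite_SigmaI finite_subset)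
  have bnd: "\<And>e. e \<in> E \<Longrightarrow> \<bar>\<gamma> e\<bar> \<le> \<mu>"
  proof -
    fix e assume e: "e \<in> E"
    have s: "{\<bar>\<gamma> e\<bar> | e. e \<in> E} = (\<lambda>e. \<bar>\<gamma> e\<bar>) ` E" by auto
    show "\<bar>\<gamma> e\<bar> \<le> \<mu>" unfolding assms(2) s using finE e by simp
  qed
  define r where "r = real q / real p"
  have invd: "x / d = r * x" for x using assms(4,5,6) unfolding r_def by simp
  define P where "P = (\<lambda>k x. \<exists>m :: nat \<Rightarrow> int. (\<forall>i<k. \<bar>m i\<bar> \<le> \<mu>) \<and> x = (\<Sum>i<k. r ^ i * real_of_int (m i)))"
  have costP: "P k (cost V0 E \<gamma> d k v w)"
    if vw: "(v, w) \<in> E" and k: "k > 0" and IH: "k > 1 \<Longrightarrow> P (k - 1) (wt V0 E \<gamma> d (k - 1) w)"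
    for k v w
  proof (cases "k = 1")
    case True
    then show ?thesis unfolding P_def cost_def
      by (intro exI[of _ "\<lambda>_. \<gamma> (v, w)"]) (auto simp: bnd vw)
  next
    case False
    then obtain j where kj: "k = Suc j" and j: "j > 0" using k by (cases k) auto
    from IH[unfolded P_def] False k kj obtain m where
      m: "\<forall>i<j. \<bar>m i\<bar> \<le> \<mu>" "wt V0 E \<gamma> d j w = (\<Sum>i<j. r ^ i * real_of_int (m i))" by auto
    define m' where "m' = (\<lambda>i. if i = 0 then \<gamma> (v, w) else m (i - 1))"
    have "cost V0 E \<gamma> d k v w = real_of_int (\<gamma> (v, w)) + r * (\<Sum>i<j. r ^ i * real_of_int (m i))"
      using False kj m(2) invd unfolding cost_def by simp
    also have "\<dots> = (\<Sum>i<k. r ^ i * real_of_int (m' i))"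
      unfolding kj sum.lessThan_Suc_shift m'_def by (simp add: sum_distrib_left mult.assoc)
    finally show ?thesis unfolding P_def
      by (intro exI[of _ m']) (use m(1) bnd vw kj in \<open>auto simp: m'_def\<close>)
  qed
  have wtP: "\<forall>v\<in>V. P k (wt V0 E \<gamma> d k v)" if "k > 0" for k
    using that
  proof (induction k)
    case 0 then show ?case by simp
  next
    case (Suc j)
    show ?case
    proof
      fix v assume v: "v \<in> V"
      obtain w where w: "(v, w) \<in> E" "wt V0 E \<gamma> d (Suc j) v = cost V0 E \<gamma> d (Suc j) v w"
        using wt_attained[OF fin EV out v, of "Suc j" V0 \<gamma> d] by auto
      have wV: "w \<in> V" using w EV by auto
      show "P (Suc j) (wt V0 E \<gamma> d (Suc j) v)" unfolding w(2)
        by (rule costP) (use w Suc wV in auto)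
    qed
  qed
  show ?thesis
  proof (intro ballI allI impI, clarify)
    fix v w k assume vw: "(v, w) \<in> E" and k: "(0::nat) < k"
    have wV: "w \<in> V" using vw EV by auto
    have "P k (cost V0 E \<gamma> d k v w)"
      by (rule costP[OF vw k]) (use wtP wV in auto)
    then obtain m where m: "\<forall>i<k. \<bar>m i\<bar> \<le> \<mu>" "cost V0 E \<gamma> d k v w = (\<Sum>i<k. r ^ i * real_of_int (m i))"
      unfolding P_def by auto
    define n where "n = (\<lambda>i. m (k - i))"
    have "(\<Sum>i = 1..k. real q ^ (k - i) * real p ^ (i - 1) * real_of_int (n i)) / real p ^ (k - 1)
        = (\<Sum>i = 1..k. real q ^ (k - i) * real p ^ (i - 1) * real_of_int (n i) / real p ^ (k - 1))"
      by (simp add: sum_divide_distrib)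
    also have "\<dots> = (\<Sum>i = 1..k. r ^ (k - i) * real_of_int (m (k - i)))"
      unfolding r_def n_def by (rule sum.cong) (use coef[OF assms(4)] in auto)
    also have "\<dots> = (\<Sum>j<k. r ^ j * real_of_int (m j))"
      by (rule reidx[where f="\<lambda>j. r ^ j * real_of_int (m j)"])
    finally show "\<exists>n :: nat \<Rightarrow> int. (\<forall>i \<in> {1..k}. \<bar>n i\<bar> \<le> \<mu>) \<and>
           cost V0 E \<gamma> d k v w =
             (\<Sum>i = 1..k. real q ^ (k - i) * real p ^ (i - 1) * real_of_int (n i)) / real p ^ (k - 1)"
      using m by (intro exI[of _ n]) (auto simp: n_def)
  qed
qed

end
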